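(* The ordinal space $X = [0,\omega_1)$ with the order topology is set strongly star Hurewicz, while its subspace $Y = \{\alpha + 1 : \alpha < \omega_1 \text{ is a limit ordinal}\}$ is not set strongly star Hurewicz.
   Context: For a subset $S$ of a space $X$ and a collection $\mathcal{U}$ of subsets of $X$, ${\rm St}(S,\mathcal{U}) = \bigcup\{U \in \mathcal{U}: U \cap S \neq \emptyset\}$. A space $X$ is set strongly star Hurewicz if for each nonempty $S \subset X$ and each sequence $(\mathcal{U}_n: n\in\mathbb{N})$ of collections of sets open in $X$ with $\overline{S} \subset \bigcup\mathcal{U}_n$ for all $n$, there are finite sets $F_n \subset \overline{S}$ such that each $x \in S$ lies in ${\rm St}(F_n,\mathcal{U}_n)$ for all but finitely many $n$. *)

theory Defs
  imports "HOL-Analysis.Analysis"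
begin

definition St :: "'a set \<Rightarrow> 'a set set \<Rightarrow> 'a set" where
  "St S \<U> = \<Union>{U \<in> \<U>. U \<inter> S \<noteq> {}}"

definition set_strongly_star_Hurewicz :: "'a topology \<Rightarrow> bool" where
  "set_strongly_star_Hurewicz T \<longleftrightarrow>
     (\<forall>S. S \<noteq> {} \<and> S \<subseteq> topspace T \<longrightarrow>
       (\<forall>\<U> :: nat \<Rightarrow> 'a set set.
          (\<forall>n. (\<forall>U\<in>\<U> n. openin T U) \<and> T closure_of S \<subseteq> \<Union>(\<U> n)) \<longrightarrow>
          (\<exists>F :: nat \<Rightarrow> 'a set.
             (\<forall>n. finite (F n) \<and> F n \<subseteq> T closure_of S) \<and>
             (\<forall>x\<in>S. \<forall>\<^sub>F n in sequentially. x \<in> St (F n) (\<U> n)))))"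

definition order_top :: "('a::linorder) topology" where
  "order_top = topology_generated_by (range lessThan \<union> range greaterThan)"

text \<open>A well-ordered type is a model of the ordinal omega_1 = [0, omega_1)
  iff it is uncountable and every proper initial segment is countable.\<close>
definition is_omega1 :: "('a::wellorder) itself \<Rightarrow> bool" where
  "is_omega1 _ \<longleftrightarrow> uncountable (UNIV :: 'a set) \<and> (\<forall>x::'a. countable {..<x})"

definition osucc :: "'a::wellorder \<Rightarrow> 'a" where
  "osucc a = (LEAST b. a < b)"

definition is_limit :: "'a::wellorder \<Rightarrow> bool" where
  "is_limit a \<longleftrightarrow> (\<exists>b. b < a) \<and> (\<forall>b. a \<noteq> osucc b)"

end

theory Submission
  imports Defs
begin

lemma ub_exists:
  assumes "is_omega1 TYPE('a::wellorder)" and "countable (A::'a set)"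
  shows "\<exists>y. \<forall>a\<in>A. a < y"
proof -
  have c: "countable (\<Union>a\<in>A. {..a})"
  proof (rule countable_UN[OF assms(2)])
    fix a assume "a \<in> A"
    have "{..a} = insert a {..<a}" by auto
    then show "countable {..a}" using assms(1) unfolding is_omega1_def by simp
  qed
  have "(\<Union>a\<in>A. {..a}) \<noteq> UNIV" using c assms(1) unfolding is_omega1_def by metis
  then obtain y where "y \<notin> (\<Union>a\<in>A. {..a})" by blast
  then show ?thesis by (auto simp: not_le)
qed

lemma osucc_gt:
  assumes "is_omega1 TYPE('a::wellorder)"
  shows "(a::'a) < osucc a"
proof -
  obtain y where "a < y" using ub_exists[OF assms, of "{a}"] by auto
  then show ?thesis unfolding osucc_def by (rule LeastI)
qed

lemma osucc_le: "(a::'a::wellorder) < x \<Longrightarrow> osucc a \<le> x"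
  unfolding osucc_def by (rule Least_le)

lemma topspace_order_top:
  assumes "is_omega1 TYPE('a::wellorder)"
  shows "topspace (order_top :: 'a topology) = UNIV"
proof -
  have "x \<in> \<Union>(range lessThan \<union> range greaterThan)" for x :: 'a
  proof -
    have "x \<in> {..<osucc x}" using osucc_gt[OF assms, of x] by simp
    then show ?thesis by (rule UnionI[OF UnI1[OF rangeI]])
  qed
  then have "\<Union>(range lessThan \<union> range greaterThan) = (UNIV::'a set)" by blast
  then show ?thesis unfolding order_top_def by (simp only: topology_generated_by_topspace)
qed

lemma open_basis_lt: "openin order_top {..<(b::'a::linorder)}"
  unfolding order_top_def by (rule topology_generated_by_Basis) auto

lemma open_basis_gt: "openin order_top {(b::'a::linorder)<..}"
  unfolding order_top_def by (rule topology_generated_by_Basis) auto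

lemma nbhd_aux:
  assumes "generate_topology_on (range lessThan \<union> range greaterThan) W"
  shows "\<forall>p::'a::linorder. p \<in> W \<and> (\<exists>a0. a0 < p) \<longrightarrow> (\<exists>a<p. {a<..p} \<subseteq> W)"
  using assms
proof (induction rule: generate_topology_on.induct)
  case Empty
  then show ?case by auto
next
  case (Int a b)
  show ?case
  proof (intro allI impI)
    fix p :: 'a assume h: "p \<in> a \<inter> b \<and> (\<exists>a0. a0 < p)"
    then obtain x y where "x < p" "{x<..p} \<subseteq> a" "y < p" "{y<..p} \<subseteq> b"
      using Int.IH by blast
    then show "\<exists>c<p. {c<..p} \<subseteq> a \<inter> b"
      by (intro exI[of _ "max x y"]) auto
  qed
next
  case (UN K)
  show ?case
  proof (intro allI impI)
    fix p :: 'a assume h: "p \<in> \<Union>K \<and> (\<exists>a0. a0 < p)"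
    then obtain k where "k \<in> K" "p \<in> k" by auto
    then obtain x where "x < p" "{x<..p} \<subseteq> k" using UN.IH h by blast
    then show "\<exists>c<p. {c<..p} \<subseteq> \<Union>K" using \<open>k \<in> K\<close> by blast
  qed
next
  case (Basis s)
  then show ?case by (auto simp: subset_iff)
qed

lemma nbhd:
  assumes "openin (order_top::'a::linorder topology) W" "p \<in> W" "a0 < p"
  shows "\<exists>a<p. {a<..p} \<subseteq> W"
  using nbhd_aux[OF openin_topology_generated_by[OF assms(1)[unfolded order_top_def]]] assms
  by blast

lemma sep_false:
  fixes x :: "nat \<Rightarrow> 'a::wellorder"
  assumes om: "is_omega1 TYPE('a::wellorder)"
    and cl: "closedin (order_top::'a topology) C"
    and op: "\<forall>V\<in>\<V>. openin order_top V"
    and cov: "C \<subseteq> \<Union>\<V>"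
    and xC: "\<And>k. x k \<in> C"
    and sep: "\<And>i j. i < j \<Longrightarrow> \<not> (\<exists>V\<in>\<V>. x i \<in> V \<and> x j \<in> V)"
  shows False
proof -
  obtain f where f: "strict_mono f" "monoseq (\<lambda>n. x (f n))" using seq_monosub by blast
  define y where "y = (\<lambda>n. x (f n))"
  have sepy: "\<not> (\<exists>V\<in>\<V>. y i \<in> V \<and> y j \<in> V)" if "i < j" for i j
  proof -
    have "f i < f j" using f(1) that by (simp add: strict_mono_less)
    then show ?thesis using sep[OF \<open>f i < f j\<close>] unfolding y_def by simp
  qed
  have yC: "y k \<in> C" for k unfolding y_def by (rule xC)
  have ne: "y i \<noteq> y j" if "i < j" for i j
  proof
    assume e: "y i = y j"
    have "y i \<in> \<Union>\<V>" using cov yC[of i] by (rule subsetD)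
    then obtain V where "V \<in> \<V>" "y i \<in> V" by (rule UnionE)
    then show False using sepy[OF that] e by auto
  qed
  have mono: "(\<forall>m n. m \<le> n \<longrightarrow> y m \<le> y n) \<or> (\<forall>m n. m \<le> n \<longrightarrow> y n \<le> y m)"
    using f(2) unfolding monoseq_def y_def by assumption
  show False
  proof (cases "\<forall>m n. m \<le> n \<longrightarrow> y m \<le> y n")
    case False
    then have dec: "\<forall>m n. m \<le> n \<longrightarrow> y n \<le> y m" using mono by blast
    define m where "m = (LEAST z. z \<in> range y)"
    have "m \<in> range y" unfolding m_def by (rule LeastI) auto
    then obtain k where k: "m = y k" by auto
    have "y (Suc k) \<le> y k" using dec by simp
    then have "y (Suc k) < y k" using ne[of k "Suc k"] by (simp add: order_less_le)
    moreover have "m \<le> y (Suc k)" unfolding m_def by (rule Least_le) auto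
    ultimately show False using k by simp
  next
    case True
    then have inc: "y m < y n" if "m < n" for m n
      using ne[OF that] that by (simp add: order_less_le)
    obtain b where b: "\<forall>k. y k < b" using ub_exists[OF om, of "range y"] by auto
    define p where "p = (LEAST z. \<forall>k. y k \<le> z)"
    have yp: "\<forall>k. y k \<le> p" unfolding p_def by (rule LeastI[of _ b]) (use b in \<open>auto intro: less_imp_le\<close>)
    have "y 0 < y 1" by (rule inc) simp
    then have a0: "y 0 < p" using yp order_less_le_trans by blast
    have appr: "\<exists>k. a < y k" if "a < p" for a
    proof (rule ccontr)
      assume "\<nexists>k. a < y k"
      then have "\<forall>k. y k \<le> a" by (auto simp: not_less)
      then have "p \<le> a" unfolding p_def by (rule Least_le)
      then show False using that by simp
    qed
    have two: "\<exists>k. y k \<in> W \<and> y (Suc k) \<in> W" if W: "openin order_top W" "p \<in> W" for W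
    proof -
      obtain a where a: "a < p" "{a<..p} \<subseteq> W" using nbhd[OF W a0] by blast
      obtain k where "a < y k" using appr[OF a(1)] by blast
      moreover have "y k < y (Suc k)" by (rule inc) simp
      ultimately have "y k \<in> {a<..p}" "y (Suc k) \<in> {a<..p}" using yp by auto
      then show ?thesis using a(2) by blast
    qed
    have pC: "p \<in> C"
    proof (rule ccontr)
      assume "p \<notin> C"
      have "openin order_top (topspace order_top - C)" using cl by (simp add: closedin_def)
      moreover have "p \<in> topspace order_top - C" using \<open>p \<notin> C\<close> topspace_order_top[OF om] by simp
      ultimately obtain k where "y k \<in> topspace order_top - C" using two[of "topspace order_top - C"] by blast
      then show False using yC by blast
    qed
    obtain V where V: "V \<in> \<V>" "p \<in> V" using cov pC by blast
    moreover have "openin order_top V" using op V by blast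
    ultimately obtain k where "y k \<in> V" "y (Suc k) \<in> V" using two[of V] by blast
    then show False using sepy[of k "Suc k"] V by blast
  qed
qed

lemma finite_star:
  assumes om: "is_omega1 TYPE('a::wellorder)"
    and cl: "closedin (order_top::'a topology) C"
    and op: "\<forall>V\<in>\<V>. openin order_top V"
    and cov: "C \<subseteq> \<Union>\<V>"
  shows "\<exists>F. finite F \<and> F \<subseteq> C \<and> C \<subseteq> St F \<V>"
proof (rule ccontr)
  assume H: "\<not> ?thesis"
  define nx where "nx = (\<lambda>F. SOME z. z \<in> C \<and> z \<notin> St F \<V>)"
  have nxp: "nx F \<in> C \<and> nx F \<notin> St F \<V>" if "finite F" "F \<subseteq> C" for F
  proof -
    have "\<exists>z. z \<in> C \<and> z \<notin> St F \<V>" using H that by blast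
    then show ?thesis unfolding nx_def by (rule someI_ex)
  qed
  define G where "G = rec_nat {} (\<lambda>k Gk. insert (nx Gk) Gk)"
  have G0: "G 0 = {}" and GS: "G (Suc k) = insert (nx (G k)) (G k)" for k
    unfolding G_def by simp_all
  have Gfin: "finite (G k) \<and> G k \<subseteq> C" for k
  proof (induction k)
    case 0 then show ?case by (simp add: G0)
  next
    case (Suc k) then show ?case using nxp[of "G k"] by (simp add: GS)
  qed
  define x where "x = (\<lambda>k. nx (G k))"
  have xC: "x k \<in> C" and xn: "x k \<notin> St (G k) \<V>" for k
    using nxp[of "G k"] Gfin[of k] unfolding x_def by auto
  have mem: "x i \<in> G j" if "i < j" for i j
    using that
  proof (induction j)
    case 0 then show ?case by simp
  next
    case (Suc j) then show ?case by (auto simp: GS x_def less_Suc_eq)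
  qed
  have sep: "\<not> (\<exists>V\<in>\<V>. x i \<in> V \<and> x j \<in> V)" if "i < j" for i j
    using xn[of j] mem[OF that] unfolding St_def by blast
  show False by (rule sep_false[OF om cl op cov xC sep])
qed

theorem mainTheorem18:
  assumes "is_omega1 TYPE('a::wellorder)"
  shows "set_strongly_star_Hurewicz (order_top :: 'a topology)
     \<and> \<not> set_strongly_star_Hurewicz
           (subtopology (order_top :: 'a topology) {osucc a | a :: 'a. is_limit a})"
proof
  show "set_strongly_star_Hurewicz (order_top :: 'a topology)"
    unfolding set_strongly_star_Hurewicz_def
  proof (intro allI impI)
    fix S :: "'a set" and \<U> :: "nat \<Rightarrow> 'a set set"
    assume h: "\<forall>n. (\<forall>U\<in>\<U> n. openin order_top U) \<and> order_top closure_of S \<subseteq> \<Union>(\<U> n)"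
    have "\<exists>F. finite F \<and> F \<subseteq> order_top closure_of S \<and> order_top closure_of S \<subseteq> St F (\<U> n)" for n
    proof -
      have "\<forall>U\<in>\<U> n. openin order_top U" using h by simp
      moreover have "order_top closure_of S \<subseteq> \<Union>(\<U> n)" using h by simp
      ultimately show ?thesis by (rule finite_star[OF assms closedin_closure_of])
    qed
    then obtain F where F: "\<And>n. finite (F n) \<and> F n \<subseteq> order_top closure_of S \<and> order_top closure_of S \<subseteq> St (F n) (\<U> n)"
      by metis
    have Ssub: "S \<subseteq> order_top closure_of S"
      by (rule closure_of_subset) (simp add: topspace_order_top[OF assms])
    have "x \<in> St (F n) (\<U> n)" if "x \<in> S" for x n
    proof -
      have "x \<in> order_top closure_of S" using Ssub that by (rule subsetD)
      then show ?thesis using F[of n] by (meson subsetD)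
    qed
    then have ev: "\<forall>x\<in>S. \<forall>\<^sub>F n in sequentially. x \<in> St (F n) (\<U> n)"
      by (simp add: always_eventually)
    have "\<forall>n. finite (F n) \<and> F n \<subseteq> order_top closure_of S" using F by simp
    with ev show "\<exists>F. (\<forall>n. finite (F n) \<and> F n \<subseteq> order_top closure_of S) \<and>
             (\<forall>x\<in>S. \<forall>\<^sub>F n in sequentially. x \<in> St (F n) (\<U> n))"
      by (intro exI[of _ F] conjI)
  qed
next
  define Y where "Y = {osucc a | a :: 'a. is_limit a}"
  define T where "T = subtopology (order_top :: 'a topology) Y"
  have tsp: "topspace T = Y" unfolding T_def using topspace_order_top[OF assms] by simp
  have sing: "openin T {y}" if yY: "y \<in> Y" for y
  proof -
    obtain a where a: "y = osucc a" using yY unfolding Y_def by auto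
    have "{a<..} \<inter> {..<osucc y} = {y}"
    proof -
      have "a < y" using a osucc_gt[OF assms] by simp
      moreover have "y < osucc y" using osucc_gt[OF assms] by simp
      moreover have "z = y" if "a < z" "z < osucc y" for z
      proof -
        have "y \<le> z" using a osucc_le[OF that(1)] by simp
        moreover have "\<not> y < z" using osucc_le[of y z] that(2) by auto
        ultimately show ?thesis by simp
      qed
      ultimately show ?thesis by auto
    qed
    moreover have "openin order_top ({a<..} \<inter> {..<osucc y})"
      by (intro openin_Int open_basis_lt open_basis_gt)
    ultimately have o: "openin order_top {y}" by simp
    have "{y} = {y} \<inter> Y" using yY by simp
    then show ?thesis unfolding T_def openin_subtopology using o by (intro exI[of _ "{y}"] conjI)
  qed
  have unb: "\<exists>l. is_limit l \<and> b < l" for b :: 'a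
  proof -
    define g where "g = rec_nat (osucc b) (\<lambda>_ z. osucc z)"
    have g0: "g 0 = osucc b" and gS: "g (Suc n) = osucc (g n)" for n unfolding g_def by simp_all
    obtain u where u: "\<forall>z\<in>range g. z < u" using ub_exists[OF assms, of "range g"] by auto
    define l where "l = (LEAST x. \<forall>n. g n < x)"
    have gl: "\<forall>n. g n < l" unfolding l_def by (rule LeastI[of _ u]) (use u in auto)
    have "b < osucc b" by (rule osucc_gt[OF assms])
    moreover have "osucc b < l" using gl g0 by metis
    ultimately have bl: "b < l" by (rule less_trans)
    have "l \<noteq> osucc c" for c
    proof
      assume lc: "l = osucc c"
      have "c < l" using lc osucc_gt[OF assms] by simp
      then have "\<not> (\<forall>n. g n < c)" unfolding l_def by (rule not_less_Least)
      then obtain n where "c \<le> g n" by (auto simp: not_less)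
      moreover have "g n < osucc (g n)" by (rule osucc_gt[OF assms])
      ultimately have "c < osucc (g n)" by (rule le_less_trans)
      then have "osucc c \<le> osucc (g n)" by (rule osucc_le)
      moreover have "osucc (g n) < l" using gl gS by metis
      ultimately show False using lc by simp
    qed
    then show ?thesis using bl unfolding is_limit_def by blast
  qed
  have Yunc: "uncountable Y"
  proof
    assume cY: "countable Y"
    obtain b where b: "\<forall>y\<in>Y. y < b" using ub_exists[OF assms cY] by auto
    obtain l where l: "is_limit l" "b < l" using unb by blast
    have "osucc l \<in> Y" unfolding Y_def using l by auto
    then have "osucc l < b" using b by simp
    have "l < osucc l" by (rule osucc_gt[OF assms])
    then have "l < b" using \<open>osucc l < b\<close> by (rule less_trans)
    then show False using l(2) by simp
  qed
  show "\<not> set_strongly_star_Hurewicz (subtopology (order_top :: 'a topology) {osucc a | a :: 'a. is_limit a})"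
  proof
    assume "set_strongly_star_Hurewicz (subtopology (order_top :: 'a topology) {osucc a | a :: 'a. is_limit a})"
    then have H: "set_strongly_star_Hurewicz T" unfolding T_def Y_def .
    have Yne: "Y \<noteq> {}" using Yunc by auto
    define U where "U = (\<lambda>n::nat. (\<lambda>y. {y}) ` Y)"
    have pre: "Y \<noteq> {} \<and> Y \<subseteq> topspace T" using Yne tsp by simp
    have hyp: "\<forall>n. (\<forall>V\<in>U n. openin T V) \<and> T closure_of Y \<subseteq> \<Union>(U n)"
    proof
      fix n
      have "\<forall>V\<in>U n. openin T V" using sing unfolding U_def by simp
      moreover have "T closure_of Y \<subseteq> \<Union>(U n)"
      proof -
        have "T closure_of Y \<subseteq> Y" using closure_of_subset_topspace[of T Y] tsp by simp
        moreover have "Y \<subseteq> \<Union>(U n)" unfolding U_def by auto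
        ultimately show ?thesis by (rule subset_trans)
      qed
      ultimately show "(\<forall>V\<in>U n. openin T V) \<and> T closure_of Y \<subseteq> \<Union>(U n)" ..
    qed
    have "\<exists>F :: nat \<Rightarrow> 'a set. (\<forall>n. finite (F n) \<and> F n \<subseteq> T closure_of Y) \<and>
             (\<forall>x\<in>Y. \<forall>\<^sub>F n in sequentially. x \<in> St (F n) (U n))"
      using H[unfolded set_strongly_star_Hurewicz_def, rule_format, OF pre hyp[rule_format]] .
    then obtain F where F: "\<forall>n. finite (F n) \<and> F n \<subseteq> T closure_of Y"
      and ev: "\<forall>x\<in>Y. \<forall>\<^sub>F n in sequentially. x \<in> St (F n) (U n)"
      by (elim exE conjE)
    have StF: "St (F n) (U n) \<subseteq> F n" for n unfolding St_def U_def by auto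
    have "Y \<subseteq> (\<Union>n. F n)"
    proof
      fix x assume "x \<in> Y"
      then have "\<forall>\<^sub>F n in sequentially. x \<in> St (F n) (U n)" using ev by simp
      then obtain N where "\<forall>n\<ge>N. x \<in> St (F n) (U n)" unfolding eventually_sequentially by (elim exE)
      then have "x \<in> St (F N) (U N)" by simp
      then have "x \<in> F N" using StF[of N] by blast
      then show "x \<in> (\<Union>n. F n)" by (rule UN_I[OF UNIV_I])
    qed
    moreover have "countable (\<Union>n. F n)"
      by (rule countable_UN) (use F in \<open>auto intro: countable_finite\<close>)
    ultimately show False using Yunc countable_subset by blast
  qed
qed

end
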